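(* Let $(\mathbf{L},\mathbf{R})\in\mathcal{P}_{\mathsf N}$ be superbalanced and suppose it admits a contraction map. Then for every $i\in[\mathsf N+1]$, the null reduction of $(\mathbf{L},\mathbf{R})$ on $i$ admits a contraction map (when the null reduction is nonempty, i.e. row $i$ of $\mathbf{L}$ is nonzero; if it is empty the statement is trivial).
   Context: $\mathcal{P}_{\mathsf N}$ denotes the set of pairs $(\mathbf{L},\mathbf{R})$ of $(0,1)$-matrices, $\mathbf{L}$ of size $(\mathsf N+1)\times m_L$ and $\mathbf{R}$ of size $(\mathsf N+1)\times m_R$, such that there is an index $p\in[\mathsf N+1]$ (the purifier) for which row $p$ of $\mathbf{L}$ and row $p$ of $\mathbf{R}$ are both zero. $\mathbf{A}_{(i)}$ denotes the $i$-th row of a matrix $\mathbf{A}$; $|v|=\sum_k|v_k|$; $\cdot$ is the dot product; for bit strings $x,x'$ of equal length, $|x-x'|$ is their Hamming distance. A contraction map for $(\mathbf{L},\mathbf{R})$ is a map $f:\{0,1\}^{m_L}\to\{0,1\}^{m_R}$ such that (1) $f(\mathbf{L}_{(i)})=\mathbf{R}_{(i)}$ for all $i\in[\mathsf N+1]$, and (2) $|x-x'|\ge|f(x)-f(x')|$ for all $x,x'\in\{0,1\}^{m_L}$. (The existence of a contraction map is taken as the criterion for the associated entropy inequality to be a holographic entropy inequality.) The pair is superbalanced if $\mathbf{L}_{(i)}\cdot\mathbf{L}_{(j)}=\mathbf{R}_{(i)}\cdot\mathbf{R}_{(j)}$ for all $i,j\in[\mathsf N+1]$. The null reduction of $(\mathbf{L},\mathbf{R})$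 on $i$ is the pair $(\mathbf{L}',\mathbf{R}')$ where $\mathbf{L}'$ consists of the columns of $\mathbf{L}$ having a $1$ in row $i$ and $\mathbf{R}'$ consists of the columns of $\mathbf{R}$ having a $1$ in row $i$. *)

theory Defs
  imports Main
begin

text \<open>Bit strings are boolean lists; a (0,1)-matrix is a list of its rows.
  Entry True stands for 1, False for 0.\<close>

definition is_01_matrix :: "nat \<Rightarrow> nat \<Rightarrow> bool list list \<Rightarrow> bool" where
  "is_01_matrix rows cols A \<longleftrightarrow> length A = rows \<and> (\<forall>r\<in>set A. length r = cols)"

definition weight :: "bool list \<Rightarrow> nat" where
  "weight x = card {k. k < length x \<and> x ! k}"

definition dot01 :: "bool list \<Rightarrow> bool list \<Rightarrow> nat" where
  "dot01 x y = card {k. k < length x \<and> k < length y \<and> x ! k \<and> y ! k}"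

definition hamming :: "bool list \<Rightarrow> bool list \<Rightarrow> nat" where
  "hamming x y = card {k. k < length x \<and> k < length y \<and> x ! k \<noteq> y ! k}"

definition in_P :: "nat \<Rightarrow> nat \<Rightarrow> nat \<Rightarrow> bool list list \<Rightarrow> bool list list \<Rightarrow> bool" where
  "in_P N mL mR L R \<longleftrightarrow>
     is_01_matrix (N + 1) mL L \<and> is_01_matrix (N + 1) mR R \<and>
     (\<exists>p < N + 1. (\<forall>k < mL. \<not> L ! p ! k) \<and> (\<forall>k < mR. \<not> R ! p ! k))"

definition superbalanced :: "nat \<Rightarrow> bool list list \<Rightarrow> bool list list \<Rightarrow> bool" where
  "superbalanced N L R \<longleftrightarrow>
     (\<forall>i < N + 1. \<forall>j < N + 1. dot01 (L ! i) (L ! j) = dot01 (R ! i) (R ! j))"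

definition contraction_map ::
  "nat \<Rightarrow> nat \<Rightarrow> bool list list \<Rightarrow> bool list list \<Rightarrow> (bool list \<Rightarrow> bool list) \<Rightarrow> bool" where
  "contraction_map mL mR L R f \<longleftrightarrow>
     (\<forall>x. length x = mL \<longrightarrow> length (f x) = mR) \<and>
     (\<forall>i < length L. f (L ! i) = R ! i) \<and>
     (\<forall>x x'. length x = mL \<longrightarrow> length x' = mL \<longrightarrow> hamming (f x) (f x') \<le> hamming x x')"

definition has_contraction_map ::
  "nat \<Rightarrow> nat \<Rightarrow> bool list list \<Rightarrow> bool list list \<Rightarrow> bool" where
  "has_contraction_map mL mR L R \<longleftrightarrow> (\<exists>f. contraction_map mL mR L R f)"

definition null_reduce :: "bool list list \<Rightarrow> nat \<Rightarrow> bool list list" where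
  "null_reduce A i = map (\<lambda>row. nths row {k. A ! i ! k}) A"

end

theory Submission
  imports Defs
begin

lemma finlt[simp]: "finite {k. k < (n::nat) \<and> P k}"
  by (rule finite_subset[of _ "{..<n}"]) auto

lemma card_split2:
  assumes "\<And>k. k < n \<Longrightarrow> P k \<longleftrightarrow> (A k \<or> B k)" "\<And>k. k < n \<Longrightarrow> \<not> (A k \<and> B k)"
  shows "card {k. k < (n::nat) \<and> P k} = card {k. k < n \<and> A k} + card {k. k < n \<and> B k}"
proof -
  have "{k. k < n \<and> P k} = {k. k < n \<and> A k} \<union> {k. k < n \<and> B k}" using assms(1) by auto
  moreover have "{k. k < n \<and> A k} \<inter> {k. k < n \<and> B k} = {}" using assms(2) by auto
  moreover have "finite {k. k < n \<and> A k}" "finite {k. k < n \<and> B k}" by (rule finlt)+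
  ultimately show ?thesis using card_Un_disjoint by metis
qed

lemma card0D: "card {k. k < (n::nat) \<and> P k} = 0 \<Longrightarrow> k < n \<Longrightarrow> \<not> P k"
proof -
  assume a: "card {k. k < n \<and> P k} = 0" "k < n"
  have "finite {k. k < n \<and> P k}" by (rule finlt)
  with a show ?thesis by auto
qed

lemma nths_zip: "length x = length y \<Longrightarrow> zip (nths x S) (nths y S) = nths (zip x y) S"
proof (induction x arbitrary: y S)
  case Nil then show ?case by simp
next
  case (Cons a xs)
  then obtain b ys where "y = b # ys" "length xs = length ys" by (cases y) auto
  then show ?case using Cons.IH by (simp add: nths_Cons)
qed


lemma len_filter_nths: "length (filter Q (nths l S)) = card {k. k < length l \<and> k \<in> S \<and> Q (l!k)}"
  unfolding nths_def length_map filter_filter length_filter_conv_card filter_map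
  apply (rule arg_cong[where f=card], rule Collect_cong)
  apply (rule conj_cong, simp)
  apply (simp add: nth_zip)
  done

lemma H: "length x = length y \<Longrightarrow>
  card {k. k < length (nths x S) \<and> k < length (nths y S) \<and> P (nths x S ! k) (nths y S ! k)}
   = card {k. k < length x \<and> k \<in> S \<and> P (x!k) (y!k)}"
proof -
  assume l: "length x = length y"
  have "card {k. k < length (nths x S) \<and> k < length (nths y S) \<and> P (nths x S ! k) (nths y S ! k)}
     = length (filter (case_prod P) (zip (nths x S) (nths y S)))"
    unfolding length_filter_conv_card
    by (rule arg_cong[where f=card], rule Collect_cong, simp add: nth_zip cong: conj_cong)
  also have "\<dots> = length (filter (case_prod P) (nths (zip x y) S))" using l by (simp add: nths_zip)
  also have "\<dots> = card {k. k < length x \<and> k \<in> S \<and> P (x!k) (y!k)}"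
    unfolding len_filter_nths using l 
    by (intro arg_cong[where f=card] Collect_cong) (simp add: nth_zip cong: conj_cong)
  finally show ?thesis .
qed

lemma ham_nths: "length x = length y \<Longrightarrow>
  hamming (nths x S) (nths y S) = card {k. k < length x \<and> k \<in> S \<and> x!k \<noteq> y!k}"
  unfolding hamming_def by (rule H)

lemma ham0: "length a = length b \<Longrightarrow> hamming a b = 0 \<Longrightarrow> a = b"
proof -
  assume l: "length a = length b" and h: "hamming a b = 0"
  have "card {k. k < length a \<and> (k < length b \<and> a ! k \<noteq> b ! k)} = 0"
    using h unfolding hamming_def by simp
  then have "\<And>k. k < length a \<Longrightarrow> a!k = b!k" using l card0D[of "length a" "\<lambda>k. k < length b \<and> a ! k \<noteq> b ! k"] by auto
  then show ?thesis using l by (rule nth_equalityI[rotated])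
qed

lemma ext_exists: "length y = card {k. k < length a \<and> a!k} \<Longrightarrow>
  \<exists>x. length x = length a \<and> (\<forall>k<length a. x!k \<longrightarrow> a!k) \<and> nths x {k. a!k} = y"
proof (induction a arbitrary: y)
  case Nil then show ?case by simp
next
  case (Cons b bs)
  have cc: "card {k. k < length a \<and> a!k} = length (filter id a)" for a :: "bool list"
    using length_filter_conv_card[of id a] by simp
  note c = cc[of "b#bs"] and c2 = cc[of bs]
  have sh: "{j. Suc j \<in> {k. (b#bs)!k}} = {k. bs!k}" by simp
  have all: "(\<forall>k<length (b#bs). (z#xs)!k \<longrightarrow> (b#bs)!k) \<longleftrightarrow> ((z \<longrightarrow> b) \<and> (\<forall>k<length bs. xs!k \<longrightarrow> bs!k))" for z xs
    unfolding length_Cons All_less_Suc2 by simp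
  show ?case
  proof (cases b)
    case True
    then obtain c ys where y: "y = c # ys" "length ys = card {k. k < length bs \<and> bs!k}"
      using Cons.prems c c2 by (cases y) auto
    from Cons.IH[OF y(2)] obtain xs where xs: "length xs = length bs" "\<forall>k<length bs. xs!k \<longrightarrow> bs!k" "nths xs {k. bs!k} = ys" by blast
    show ?thesis
      apply (rule exI[of _ "c # xs"])
      using xs True y by (simp add: All_less_Suc2 nths_Cons sh)
  next
    case False
    then have "length y = card {k. k < length bs \<and> bs!k}" using Cons.prems c c2 by simp
    from Cons.IH[OF this] obtain xs where xs: "length xs = length bs" "\<forall>k<length bs. xs!k \<longrightarrow> bs!k" "nths xs {k. bs!k} = y" by blast
    show ?thesis
      apply (rule exI[of _ "False # xs"])
      using xs False by (simp add: All_less_Suc2 nths_Cons sh)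
  qed
qed


lemma geo:
  assumes h1: "card {k. k < (m::nat) \<and> z k} \<le> c"
    and h2: "card {k. k < m \<and> z k \<noteq> r k} + c \<le> card {k. k < m \<and> r k}"
  shows "\<forall>k<m. z k \<longrightarrow> r k" "card {k. k < m \<and> z k} = c"
proof -
  have s1: "card {k. k < m \<and> z k \<noteq> r k} = card {k. k < m \<and> z k \<and> \<not> r k} + card {k. k < m \<and> \<not> z k \<and> r k}"
    by (rule card_split2) auto
  have s2: "card {k. k < m \<and> z k} = card {k. k < m \<and> z k \<and> r k} + card {k. k < m \<and> z k \<and> \<not> r k}"
    by (rule card_split2) auto
  have s3: "card {k. k < m \<and> r k} = card {k. k < m \<and> z k \<and> r k} + card {k. k < m \<and> \<not> z k \<and> r k}"
    by (rule card_split2) auto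
  have "card {k. k < m \<and> z k \<and> \<not> r k} = 0" using h1 h2 s1 s2 s3 by linarith
  then show "\<forall>k<m. z k \<longrightarrow> r k" using card0D[of m "\<lambda>k. z k \<and> \<not> r k"] by blast
  show "card {k. k < m \<and> z k} = c" using h1 h2 s1 s2 s3 by linarith
qed

theorem theorem1:
  fixes N mL mR :: nat and L R :: "bool list list" and i :: nat
  assumes "in_P N mL mR L R"
    and "superbalanced N L R"
    and "has_contraction_map mL mR L R"
    and "i < N + 1"
  shows "has_contraction_map (weight (L ! i)) (weight (R ! i))
           (null_reduce L i) (null_reduce R i)"
proof -
  have lenL: "length L = N + 1" and lenR: "length R = N + 1"
    and rL: "\<forall>r\<in>set L. length r = mL" and rR: "\<forall>r\<in>set R. length r = mR"
    using assms(1) unfolding in_P_def is_01_matrix_def by auto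
  obtain p where p: "p < N + 1" "\<forall>k < mL. \<not> L ! p ! k" "\<forall>k < mR. \<not> R ! p ! k"
    using assms(1) unfolding in_P_def by auto
  obtain f where f: "contraction_map mL mR L R f"
    using assms(3) unfolding has_contraction_map_def by auto
  have flen: "\<And>x. length x = mL \<Longrightarrow> length (f x) = mR"
    and frow: "\<And>j. j < N + 1 \<Longrightarrow> f (L ! j) = R ! j"
    and fcon: "\<And>x x'. length x = mL \<Longrightarrow> length x' = mL \<Longrightarrow> hamming (f x) (f x') \<le> hamming x x'"
    using f lenL unfolding contraction_map_def by auto
  have lLj: "\<And>j. j < N + 1 \<Longrightarrow> length (L ! j) = mL" using rL lenL by simp
  have lRj: "\<And>j. j < N + 1 \<Longrightarrow> length (R ! j) = mR" using rR lenR by simp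
  have sb: "\<And>j k. j < N + 1 \<Longrightarrow> k < N + 1 \<Longrightarrow>
      card {t. t < mL \<and> L ! j ! t \<and> L ! k ! t} = card {t. t < mR \<and> R ! j ! t \<and> R ! k ! t}"
  proof -
    fix j k assume jk: "j < N + 1" "k < N + 1"
    have "dot01 (L ! j) (L ! k) = dot01 (R ! j) (R ! k)"
      using assms(2) jk unfolding superbalanced_def by blast
    then show "card {t. t < mL \<and> L ! j ! t \<and> L ! k ! t} = card {t. t < mR \<and> R ! j ! t \<and> R ! k ! t}"
      unfolding dot01_def using lLj[OF jk(1)] lLj[OF jk(2)] lRj[OF jk(1)] lRj[OF jk(2)] by simp
  qed
  have Lp: "L ! p = replicate mL False"
    by (rule nth_equalityI) (use p lLj in auto)
  have Rp: "R ! p = replicate mR False"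
    by (rule nth_equalityI) (use p lRj in auto)
  have f0: "f (replicate mL False) = replicate mR False" using frow[OF p(1)] Lp Rp by simp
  have hamz: "\<And>x n. length x = n \<Longrightarrow> hamming x (replicate n False) = card {k. k < n \<and> x ! k}"
    unfolding hamming_def by (intro arg_cong[where f=card] Collect_cong) auto
  have hamd: "\<And>x y n. length x = n \<Longrightarrow> length y = n \<Longrightarrow> hamming x y = card {k. k < n \<and> x ! k \<noteq> y ! k}"
    unfolding hamming_def by (intro arg_cong[where f=card] Collect_cong) auto
  define Li where "Li = L ! i"
  define Ri where "Ri = R ! i"
  define SL where "SL = {k. L ! i ! k}"
  define SR where "SR = {k. R ! i ! k}"
  have lLi: "length Li = mL" using lLj assms(4) Li_def by simp
  have lRi: "length Ri = mR" using lRj assms(4) Ri_def by simp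
  have wLi: "weight Li = card {k. k < mL \<and> Li ! k}" unfolding weight_def lLi ..
  have wRi: "weight Ri = card {k. k < mR \<and> Ri ! k}" unfolding weight_def lRi ..
  have wLR: "card {k. k < mL \<and> Li ! k} = card {k. k < mR \<and> Ri ! k}"
    using sb[OF assms(4) assms(4)] unfolding Li_def Ri_def by simp
  have A: "\<And>x. length x = mL \<Longrightarrow> (\<forall>k<mL. x ! k \<longrightarrow> Li ! k) \<Longrightarrow>
      (\<forall>k<mR. f x ! k \<longrightarrow> Ri ! k) \<and> card {k. k < mR \<and> f x ! k} = card {k. k < mL \<and> x ! k}"
  proof -
    fix x assume lx: "length x = mL" and sx: "\<forall>k<mL. x ! k \<longrightarrow> Li ! k"
    have lz: "length (f x) = mR" using flen lx by simp
    have h1: "card {k. k < mR \<and> f x ! k} \<le> card {k. k < mL \<and> x ! k}"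
      using fcon[OF lx, of "replicate mL False"] f0 hamz[OF lx] hamz[OF lz] by simp
    have h2: "hamming (f x) Ri \<le> hamming x Li"
      using fcon[OF lx, of Li] lLi frow[OF assms(4)] Li_def Ri_def by simp
    have s: "card {k. k < mL \<and> Li ! k} = card {k. k < mL \<and> x ! k} + card {k. k < mL \<and> x ! k \<noteq> Li ! k}"
      by (rule card_split2) (use sx in auto)
    have "card {k. k < mR \<and> f x ! k \<noteq> Ri ! k} + card {k. k < mL \<and> x ! k} \<le> card {k. k < mR \<and> Ri ! k}"
      using h2 hamd[OF lz lRi] hamd[OF lx lLi] s wLR by linarith
    from geo[of mR "\<lambda>k. f x ! k" "card {k. k < mL \<and> x ! k}" "\<lambda>k. Ri ! k", OF h1 this]
    show "(\<forall>k<mR. f x ! k \<longrightarrow> Ri ! k) \<and> card {k. k < mR \<and> f x ! k} = card {k. k < mL \<and> x ! k}"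
      by blast
  qed
  define ch where "ch y = (SOME x. length x = mL \<and> (\<forall>k<mL. x ! k \<longrightarrow> Li ! k) \<and> nths x SL = y)" for y
  define g where "g y = nths (f (ch y)) SR" for y
  have ch: "\<And>y. length y = weight Li \<Longrightarrow>
      length (ch y) = mL \<and> (\<forall>k<mL. ch y ! k \<longrightarrow> Li ! k) \<and> nths (ch y) SL = y"
  proof -
    fix y :: "bool list" assume "length y = weight Li"
    then have "length y = card {k. k < length Li \<and> Li ! k}" using wLi lLi by simp
    from ext_exists[OF this] have "\<exists>x. length x = mL \<and> (\<forall>k<mL. x ! k \<longrightarrow> Li ! k) \<and> nths x SL = y"
      using lLi SL_def Li_def by simp
    then show "length (ch y) = mL \<and> (\<forall>k<mL. ch y ! k \<longrightarrow> Li ! k) \<and> nths (ch y) SL = y"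
      unfolding ch_def by (rule someI_ex)
  qed
  have hred: "\<And>x x'. length x = mL \<Longrightarrow> length x' = mL \<Longrightarrow> (\<forall>k<mL. x ! k \<longrightarrow> Li ! k) \<Longrightarrow>
      (\<forall>k<mL. x' ! k \<longrightarrow> Li ! k) \<Longrightarrow> hamming (nths x SL) (nths x' SL) = hamming x x'"
  proof -
    fix x x' assume l: "length x = mL" "length x' = mL" and s: "\<forall>k<mL. x ! k \<longrightarrow> Li ! k" "\<forall>k<mL. x' ! k \<longrightarrow> Li ! k"
    have "hamming (nths x SL) (nths x' SL) = card {k. k < mL \<and> k \<in> SL \<and> x ! k \<noteq> x' ! k}"
      using ham_nths[of x x' SL] l by simp
    also have "\<dots> = card {k. k < mL \<and> x ! k \<noteq> x' ! k}"
      by (intro arg_cong[where f=card] Collect_cong) (use s in \<open>auto simp: SL_def Li_def\<close>)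
    also have "\<dots> = hamming x x'" using hamd[OF l] by simp
    finally show "hamming (nths x SL) (nths x' SL) = hamming x x'" .
  qed
  have glen: "\<And>y. length y = weight Li \<Longrightarrow> length (g y) = weight Ri"
  proof -
    fix y :: "bool list" assume "length y = weight Li"
    then have "length (ch y) = mL" using ch[of y] by blast
    then have lf: "length (f (ch y)) = mR" using flen by blast
    have "{k. k < length (f (ch y)) \<and> k \<in> SR} = {k. k < mR \<and> Ri ! k}"
      unfolding lf SR_def Ri_def by simp
    then show "length (g y) = weight Ri"
      unfolding g_def length_nths wRi by simp
  qed
  have gcon: "\<And>y y'. length y = weight Li \<Longrightarrow> length y' = weight Li \<Longrightarrow> hamming (g y) (g y') \<le> hamming y y'"
  proof -
    fix y y' :: "bool list" assume ly: "length y = weight Li" "length y' = weight Li"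
    note cy = ch[OF ly(1)] and cy' = ch[OF ly(2)]
    have lf: "length (f (ch y)) = mR" "length (f (ch y')) = mR" using flen cy cy' by simp_all
    have "hamming (g y) (g y') = card {k. k < mR \<and> k \<in> SR \<and> f (ch y) ! k \<noteq> f (ch y') ! k}"
      unfolding g_def using ham_nths[of "f (ch y)" "f (ch y')" SR] lf by simp
    also have "\<dots> \<le> card {k. k < mR \<and> f (ch y) ! k \<noteq> f (ch y') ! k}"
      by (rule card_mono) auto
    also have "\<dots> = hamming (f (ch y)) (f (ch y'))" using hamd[OF lf] by simp
    also have "\<dots> \<le> hamming (ch y) (ch y')" using fcon[of "ch y" "ch y'"] cy cy' by simp
    also have "\<dots> = hamming (nths (ch y) SL) (nths (ch y') SL)" using hred[of "ch y" "ch y'"] cy cy' by simp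
    also have "\<dots> = hamming y y'" using cy cy' by simp
    finally show "hamming (g y) (g y') \<le> hamming y y'" .
  qed
  have grow: "\<And>j. j < N + 1 \<Longrightarrow> g (nths (L ! j) SL) = nths (R ! j) SR"
  proof -
    fix j assume j: "j < N + 1"
    define y where "y = map (\<lambda>k. L ! j ! k \<and> Li ! k) [0..<mL]"
    have ly: "length y = mL" unfolding y_def by simp
    have yk: "\<And>k. k < mL \<Longrightarrow> y ! k = (L ! j ! k \<and> Li ! k)" unfolding y_def by simp
    have sy: "\<forall>k<mL. y ! k \<longrightarrow> Li ! k" using yk by simp
    have e1: "nths y SL = nths (L ! j) SL"
    proof (rule ham0)
      show "length (nths y SL) = length (nths (L ! j) SL)" unfolding length_nths using ly lLj[OF j] by simp
      have "hamming (nths y SL) (nths (L ! j) SL) = card {k. k < mL \<and> k \<in> SL \<and> y ! k \<noteq> L ! j ! k}"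
        using ham_nths[of y "L ! j" SL] ly lLj[OF j] by simp
      also have "{k. k < mL \<and> k \<in> SL \<and> y ! k \<noteq> L ! j ! k} = {}"
        using yk unfolding SL_def Li_def by auto
      finally show "hamming (nths y SL) (nths (L ! j) SL) = 0" by simp
    qed
    have lnj: "length (nths (L ! j) SL) = weight Li"
      unfolding length_nths SL_def using lLj[OF j] wLi Li_def by simp
    note cj = ch[OF lnj]
    have chy: "ch (nths (L ! j) SL) = y"
    proof (rule ham0)
      show "length (ch (nths (L ! j) SL)) = length y" using cj ly by simp
      have "hamming (ch (nths (L ! j) SL)) y = hamming (nths (ch (nths (L ! j) SL)) SL) (nths y SL)"
        using hred[of "ch (nths (L ! j) SL)" y] cj ly sy by simp
      also have "\<dots> = 0" using cj e1 unfolding hamming_def by simp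
      finally show "hamming (ch (nths (L ! j) SL)) y = 0" .
    qed
    define z where "z = f y"
    have lz: "length z = mR" using flen ly z_def by simp
    from A[OF ly sy] have zR: "\<forall>k<mR. z ! k \<longrightarrow> Ri ! k"
      and cz: "card {k. k < mR \<and> z ! k} = card {k. k < mL \<and> y ! k}" unfolding z_def by auto
    have cy: "card {k. k < mL \<and> y ! k} = card {k. k < mR \<and> R ! j ! k \<and> Ri ! k}"
    proof -
      have "card {k. k < mL \<and> y ! k} = card {k. k < mL \<and> L ! j ! k \<and> L ! i ! k}"
        by (intro arg_cong[where f=card] Collect_cong) (use yk Li_def in auto)
      also have "\<dots> = card {k. k < mR \<and> R ! j ! k \<and> Ri ! k}" using sb[OF j assms(4)] Ri_def by simp
      finally show ?thesis .
    qed
    have h2: "hamming z (R ! j) \<le> hamming y (L ! j)"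
      using fcon[OF ly lLj[OF j]] frow[OF j] z_def by simp
    have s: "card {k. k < mL \<and> L ! j ! k} = card {k. k < mL \<and> y ! k} + card {k. k < mL \<and> y ! k \<noteq> L ! j ! k}"
      by (rule card_split2) (use yk in auto)
    have wj: "card {k. k < mL \<and> L ! j ! k} = card {k. k < mR \<and> R ! j ! k}"
      using sb[OF j j] by simp
    have "card {k. k < mR \<and> z ! k \<noteq> R ! j ! k} + card {k. k < mL \<and> y ! k} \<le> card {k. k < mR \<and> R ! j ! k}"
      using h2 hamd[OF lz lRj[OF j]] hamd[OF ly lLj[OF j]] s wj by linarith
    from geo(1)[of mR "\<lambda>k. z ! k" "card {k. k < mL \<and> y ! k}" "\<lambda>k. R ! j ! k", OF _ this] cz
    have zRj: "\<forall>k<mR. z ! k \<longrightarrow> R ! j ! k" by simp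
    have sub: "{k. k < mR \<and> z ! k} \<subseteq> {k. k < mR \<and> R ! j ! k \<and> Ri ! k}" using zR zRj by auto
    have eqs: "{k. k < mR \<and> z ! k} = {k. k < mR \<and> R ! j ! k \<and> Ri ! k}"
      by (rule card_subset_eq[OF finlt sub]) (use cz cy in simp)
    have "nths z SR = nths (R ! j) SR"
    proof (rule ham0)
      show "length (nths z SR) = length (nths (R ! j) SR)" unfolding length_nths using lz lRj[OF j] by simp
      have "hamming (nths z SR) (nths (R ! j) SR) = card {k. k < mR \<and> k \<in> SR \<and> z ! k \<noteq> R ! j ! k}"
        using ham_nths[of z "R ! j" SR] lz lRj[OF j] by simp
      also have "{k. k < mR \<and> k \<in> SR \<and> z ! k \<noteq> R ! j ! k} = {}"
      proof -
        have "\<And>k. k < mR \<Longrightarrow> Ri ! k \<Longrightarrow> z ! k = R ! j ! k"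
          using eqs by blast
        then show ?thesis unfolding SR_def Ri_def by auto
      qed
      finally show "hamming (nths z SR) (nths (R ! j) SR) = 0" by simp
    qed
    then show "g (nths (L ! j) SL) = nths (R ! j) SR" unfolding g_def chy z_def .
  qed
  have "contraction_map (weight (L ! i)) (weight (R ! i)) (null_reduce L i) (null_reduce R i) g"
    unfolding contraction_map_def
  proof (intro conjI allI impI)
    fix y :: "bool list" assume "length y = weight (L ! i)"
    then show "length (g y) = weight (R ! i)" using glen Li_def Ri_def by simp
  next
    fix j assume "j < length (null_reduce L i)"
    then have j: "j < N + 1" unfolding null_reduce_def using lenL by simp
    show "g (null_reduce L i ! j) = null_reduce R i ! j"
      unfolding null_reduce_def using j lenL lenR grow[OF j] SL_def SR_def by simp
  next
    fix y y' :: "bool list" assume "length y = weight (L ! i)" "length y' = weight (L ! i)"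
    then show "hamming (g y) (g y') \<le> hamming y y'" using gcon Li_def by simp
  qed
  then show ?thesis unfolding has_contraction_map_def by blast
qed

end
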